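(* For $\epsilon>0$ and $\rho\ge0$ let $\mathbf G_{\epsilon\rho}(s):=\mathbf C(sI-\mathbf A_{\epsilon\rho})^{-1}\mathbf B$. Then for every fixed $s\in\mathbb C\setminus\{-m_\rho,-\mu_\rho\}$, $\lim_{\epsilon\to0}\mathbf G_{\epsilon\rho}(s)=\mathbf H_\rho(s)$, where $$\mathbf H_\rho(s):=\begin{bmatrix}\bar\Pi_{1u}&0\\\Pi_{2u}&\mu I\end{bmatrix}\begin{bmatrix}g_{m\rho}(s)I&0\\0&g_{\mu\rho}(s)I\end{bmatrix}\begin{bmatrix}-\bar\Pi_{1u}^\top&-\frac1\mu\Pi_{2u}^\top\\0&I\end{bmatrix},$$ with $g_{m\rho}(s):=(s+m_\rho)^{-1}$ and $g_{\mu\rho}(s):=(s+\mu_\rho)^{-1}$.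
   Context: Let $A\in\mathbb R^{n\times n}$ be Hurwitz, $B\in\mathbb R^{n\times p}$, and for $i=1,2$ let $C_i\in\mathbb R^{r_i\times n}$. Let $\Pi_{iu}:=-C_iA^{-1}B$ and $\bar\Pi_{1u}:=\begin{bmatrix}I\\\Pi_{1u}\end{bmatrix}$. Let $m>0$, $\mu>0$, $\rho\ge0$, $m_\rho:=m-\rho$ and $\mu_\rho:=\mu-\rho$. Define $$\mathbf A_\epsilon:=\begin{bmatrix}\frac1\epsilon A&\frac1\epsilon B&0\\0&-mI&0\\0&0&-\mu I\end{bmatrix},\qquad \mathbf A_{\epsilon\rho}:=\mathbf A_\epsilon+\rho I,$$ $$\mathbf B=\begin{bmatrix}0&0&0\\-I&-\Pi_{1u}^\top&-\frac1\mu\Pi_{2u}^\top\\0&0&I\end{bmatrix},\qquad \mathbf C=\begin{bmatrix}0&I&0\\C_1&0&0\\C_2&0&\mu I\end{bmatrix},$$ where the diagonal blocks of $\mathbf A_\epsilon$ have sizes $n,p,r_2$, and the identity blocks of $\mathbf B$ and $\mathbf C$ have compatible sizes. *)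

theory Defs
  imports "HOL-Analysis.Analysis"
begin

definition cmat :: "real^('c::finite)^('r::finite) \<Rightarrow> complex^'c^'r" where
  "cmat M = (\<chi> i j. complex_of_real (M $ i $ j))"

definition hurwitz :: "real^('n::finite)^'n \<Rightarrow> bool" where
  "hurwitz A \<longleftrightarrow> (\<forall>l::complex. det (mat l - cmat A) = 0 \<longrightarrow> Re l < 0)"

text \<open>Block matrices; block row/column index types are sums (blocks in order).\<close>
definition block2 ::
  "('a::type)^('c1::finite)^('r1::finite) \<Rightarrow> 'a^('c2::finite)^'r1 \<Rightarrow> 'a^'c1^('r2::finite) \<Rightarrow> 'a^'c2^'r2 \<Rightarrow> 'a^('c1+'c2)^('r1+'r2)" where
  "block2 M11 M12 M21 M22 = (\<chi> i j. case i of
      Inl a \<Rightarrow> (case j of Inl b \<Rightarrow> M11$a$b | Inr b \<Rightarrow> M12$a$b)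
    | Inr a \<Rightarrow> (case j of Inl b \<Rightarrow> M21$a$b | Inr b \<Rightarrow> M22$a$b))"

definition block3 ::
  "('a::type)^('c1::finite)^('r1::finite) \<Rightarrow> 'a^('c2::finite)^'r1 \<Rightarrow> 'a^('c3::finite)^'r1 \<Rightarrow>
   'a^'c1^('r2::finite) \<Rightarrow> 'a^'c2^'r2 \<Rightarrow> 'a^'c3^'r2 \<Rightarrow>
   'a^'c1^('r3::finite) \<Rightarrow> 'a^'c2^'r3 \<Rightarrow> 'a^'c3^'r3 \<Rightarrow> 'a^('c1+('c2+'c3))^('r1+('r2+'r3))" where
  "block3 M11 M12 M13 M21 M22 M23 M31 M32 M33 = (\<chi> i j. case i of
      Inl a \<Rightarrow> (case j of Inl b \<Rightarrow> M11$a$b | Inr (Inl b) \<Rightarrow> M12$a$b | Inr (Inr b) \<Rightarrow> M13$a$b)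
    | Inr (Inl a) \<Rightarrow> (case j of Inl b \<Rightarrow> M21$a$b | Inr (Inl b) \<Rightarrow> M22$a$b | Inr (Inr b) \<Rightarrow> M23$a$b)
    | Inr (Inr a) \<Rightarrow> (case j of Inl b \<Rightarrow> M31$a$b | Inr (Inl b) \<Rightarrow> M32$a$b | Inr (Inr b) \<Rightarrow> M33$a$b))"

definition block32 ::
  "('a::type)^('c1::finite)^('r1::finite) \<Rightarrow> 'a^('c2::finite)^'r1 \<Rightarrow> 'a^'c1^('r2::finite) \<Rightarrow> 'a^'c2^'r2 \<Rightarrow>
   'a^'c1^('r3::finite) \<Rightarrow> 'a^'c2^'r3 \<Rightarrow> 'a^('c1+'c2)^('r1+('r2+'r3))" where
  "block32 M11 M12 M21 M22 M31 M32 = (\<chi> i j. case i of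
      Inl a \<Rightarrow> (case j of Inl b \<Rightarrow> M11$a$b | Inr b \<Rightarrow> M12$a$b)
    | Inr (Inl a) \<Rightarrow> (case j of Inl b \<Rightarrow> M21$a$b | Inr b \<Rightarrow> M22$a$b)
    | Inr (Inr a) \<Rightarrow> (case j of Inl b \<Rightarrow> M31$a$b | Inr b \<Rightarrow> M32$a$b))"

definition block23 ::
  "('a::type)^('c1::finite)^('r1::finite) \<Rightarrow> 'a^('c2::finite)^'r1 \<Rightarrow> 'a^('c3::finite)^'r1 \<Rightarrow>
   'a^'c1^('r2::finite) \<Rightarrow> 'a^'c2^'r2 \<Rightarrow> 'a^'c3^'r2 \<Rightarrow> 'a^('c1+('c2+'c3))^('r1+'r2)" where
  "block23 M11 M12 M13 M21 M22 M23 = (\<chi> i j. case i of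
      Inl a \<Rightarrow> (case j of Inl b \<Rightarrow> M11$a$b | Inr (Inl b) \<Rightarrow> M12$a$b | Inr (Inr b) \<Rightarrow> M13$a$b)
    | Inr a \<Rightarrow> (case j of Inl b \<Rightarrow> M21$a$b | Inr (Inl b) \<Rightarrow> M22$a$b | Inr (Inr b) \<Rightarrow> M23$a$b))"

definition Piu :: "real^('n::finite)^'n \<Rightarrow> real^('p::finite)^'n \<Rightarrow> real^'n^('r::finite) \<Rightarrow> complex^'p^'r" where
  "Piu A B Ci = cmat (- (Ci ** matrix_inv A ** B))"

definition Aeps :: "real^('n::finite)^'n \<Rightarrow> real^('p::finite)^'n \<Rightarrow> real \<Rightarrow> real \<Rightarrow> real
    \<Rightarrow> real^('n+('p+('r2::finite)))^('n+('p+'r2))" where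
  "Aeps A B m mu eps = block3
      ((1/eps) *\<^sub>R A) ((1/eps) *\<^sub>R B) 0
      0 (mat (-m)) 0
      0 0 (mat (-mu))"

definition Aepsrho :: "real^('n::finite)^'n \<Rightarrow> real^('p::finite)^'n \<Rightarrow> real \<Rightarrow> real \<Rightarrow> real \<Rightarrow> real
    \<Rightarrow> real^('n+('p+('r2::finite)))^('n+('p+'r2))" where
  "Aepsrho A B m mu eps rho = Aeps A B m mu eps + mat rho"

definition Bbold :: "real^('n::finite)^'n \<Rightarrow> real^('p::finite)^'n \<Rightarrow> real^'n^('r1::finite) \<Rightarrow> real^'n^('r2::finite) \<Rightarrow> real
    \<Rightarrow> complex^('p+('r1+'r2))^('n+('p+'r2))" where
  "Bbold A B C1 C2 mu = block3
      0 0 0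
      (- mat 1) (- transpose (Piu A B C1)) (- ((1/mu) *\<^sub>R transpose (Piu A B C2)))
      0 0 (mat 1)"

definition Cbold :: "real^('n::finite)^('r1::finite) \<Rightarrow> real^'n^('r2::finite) \<Rightarrow> real
    \<Rightarrow> complex^('n+(('p::finite)+'r2))^('p+('r1+'r2))" where
  "Cbold C1 C2 mu = block3
      0 (mat 1) 0
      (cmat C1) 0 0
      (cmat C2) 0 (mat (complex_of_real mu))"

definition Gbold :: "real^('n::finite)^'n \<Rightarrow> real^('p::finite)^'n \<Rightarrow> real^'n^('r1::finite) \<Rightarrow> real^'n^('r2::finite)
    \<Rightarrow> real \<Rightarrow> real \<Rightarrow> real \<Rightarrow> real \<Rightarrow> complex \<Rightarrow> complex^('p+('r1+'r2))^('p+('r1+'r2))" where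
  "Gbold A B C1 C2 m mu eps rho s =
     Cbold C1 C2 mu ** matrix_inv (mat s - cmat (Aepsrho A B m mu eps rho)) ** Bbold A B C1 C2 mu"

text \<open>H_rho(s); the block [I; Pi_1u] = bar Pi_1u is written out.\<close>
definition Hbold :: "real^('n::finite)^'n \<Rightarrow> real^('p::finite)^'n \<Rightarrow> real^'n^('r1::finite) \<Rightarrow> real^'n^('r2::finite)
    \<Rightarrow> real \<Rightarrow> real \<Rightarrow> real \<Rightarrow> complex \<Rightarrow> complex^('p+('r1+'r2))^('p+('r1+'r2))" where
  "Hbold A B C1 C2 m mu rho s =
     (block32
        (mat 1) 0
        (Piu A B C1) 0
        (Piu A B C2) (mat (complex_of_real mu))
      :: complex^('p+'r2)^('p+('r1+'r2)))
     ** block2 (mat (inverse (s + complex_of_real (m - rho)))) 0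
               0 (mat (inverse (s + complex_of_real (mu - rho))))
     ** block23
        (- mat 1) (- transpose (Piu A B C1)) (- ((1/mu) *\<^sub>R transpose (Piu A B C2)))
        0 0 (mat 1)"

end

theory Submission
  imports Defs
begin


lemma sum_UNIV_Plus: "(\<Sum>x\<in>(UNIV::('a::finite+'b::finite) set). f x) = (\<Sum>a\<in>UNIV. f (Inl a)) + (\<Sum>b\<in>UNIV. f (Inr b))"
  by (subst UNIV_Plus_UNIV[symmetric], subst sum.Plus) (auto simp: comp_def)

lemma all_Plus: "(\<forall>x::'a+'b. P x) = ((\<forall>a. P (Inl a)) \<and> (\<forall>b. P (Inr b)))"
  by (metis sum.exhaust)

lemma block3_1 [simp]: "block3 M11 M12 M13 M21 M22 M23 M31 M32 M33 $ Inl a $ Inl b = M11$a$b"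
  by (simp add: block3_def)
lemma block3_2 [simp]: "block3 M11 M12 M13 M21 M22 M23 M31 M32 M33 $ Inl a $ Inr (Inl b) = M12$a$b"
  by (simp add: block3_def)
lemma block3_3 [simp]: "block3 M11 M12 M13 M21 M22 M23 M31 M32 M33 $ Inl a $ Inr (Inr b) = M13$a$b"
  by (simp add: block3_def)
lemma block3_4 [simp]: "block3 M11 M12 M13 M21 M22 M23 M31 M32 M33 $ Inr (Inl a) $ Inl b = M21$a$b"
  by (simp add: block3_def)
lemma block3_5 [simp]: "block3 M11 M12 M13 M21 M22 M23 M31 M32 M33 $ Inr (Inl a) $ Inr (Inl b) = M22$a$b"
  by (simp add: block3_def)
lemma block3_6 [simp]: "block3 M11 M12 M13 M21 M22 M23 M31 M32 M33 $ Inr (Inl a) $ Inr (Inr b) = M23$a$b"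
  by (simp add: block3_def)
lemma block3_7 [simp]: "block3 M11 M12 M13 M21 M22 M23 M31 M32 M33 $ Inr (Inr a) $ Inl b = M31$a$b"
  by (simp add: block3_def)
lemma block3_8 [simp]: "block3 M11 M12 M13 M21 M22 M23 M31 M32 M33 $ Inr (Inr a) $ Inr (Inl b) = M32$a$b"
  by (simp add: block3_def)
lemma block3_9 [simp]: "block3 M11 M12 M13 M21 M22 M23 M31 M32 M33 $ Inr (Inr a) $ Inr (Inr b) = M33$a$b"
  by (simp add: block3_def)
lemma block32_1 [simp]: "block32 M11 M12 M21 M22 M31 M32 $ Inl a $ Inl b = M11$a$b"
  by (simp add: block32_def)
lemma block32_2 [simp]: "block32 M11 M12 M21 M22 M31 M32 $ Inl a $ Inr b = M12$a$b"
  by (simp add: block32_def)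
lemma block32_3 [simp]: "block32 M11 M12 M21 M22 M31 M32 $ Inr (Inl a) $ Inl b = M21$a$b"
  by (simp add: block32_def)
lemma block32_4 [simp]: "block32 M11 M12 M21 M22 M31 M32 $ Inr (Inl a) $ Inr b = M22$a$b"
  by (simp add: block32_def)
lemma block32_5 [simp]: "block32 M11 M12 M21 M22 M31 M32 $ Inr (Inr a) $ Inl b = M31$a$b"
  by (simp add: block32_def)
lemma block32_6 [simp]: "block32 M11 M12 M21 M22 M31 M32 $ Inr (Inr a) $ Inr b = M32$a$b"
  by (simp add: block32_def)
lemma block23_1 [simp]: "block23 M11 M12 M13 M21 M22 M23 $ Inl a $ Inl b = M11$a$b"
  by (simp add: block23_def)
lemma block23_2 [simp]: "block23 M11 M12 M13 M21 M22 M23 $ Inl a $ Inr (Inl b) = M12$a$b"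
  by (simp add: block23_def)
lemma block23_3 [simp]: "block23 M11 M12 M13 M21 M22 M23 $ Inl a $ Inr (Inr b) = M13$a$b"
  by (simp add: block23_def)
lemma block23_4 [simp]: "block23 M11 M12 M13 M21 M22 M23 $ Inr a $ Inl b = M21$a$b"
  by (simp add: block23_def)
lemma block23_5 [simp]: "block23 M11 M12 M13 M21 M22 M23 $ Inr a $ Inr (Inl b) = M22$a$b"
  by (simp add: block23_def)
lemma block23_6 [simp]: "block23 M11 M12 M13 M21 M22 M23 $ Inr a $ Inr (Inr b) = M23$a$b"
  by (simp add: block23_def)
lemma block2_1 [simp]: "block2 M11 M12 M21 M22 $ Inl a $ Inl b = M11$a$b"
  by (simp add: block2_def)
lemma block2_2 [simp]: "block2 M11 M12 M21 M22 $ Inl a $ Inr b = M12$a$b"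
  by (simp add: block2_def)
lemma block2_3 [simp]: "block2 M11 M12 M21 M22 $ Inr a $ Inl b = M21$a$b"
  by (simp add: block2_def)
lemma block2_4 [simp]: "block2 M11 M12 M21 M22 $ Inr a $ Inr b = M22$a$b"
  by (simp add: block2_def)

lemma mat_eq_iff3: "(X::'a^('c1::finite+('c2::finite+'c3::finite))^('r1::finite+('r2::finite+'r3::finite))) = Y \<longleftrightarrow>
   (\<forall>i j. X$i$j = Y$i$j)"
  by (simp add: vec_eq_iff)

lemma block3_mult:
  fixes X11 :: "'a::semiring_1^('k1::finite)^('r1::finite)"
  shows "block3 X11 X12 X13 X21 X22 X23 X31 X32 X33 ** block3 Y11 Y12 Y13 Y21 Y22 Y23 Y31 Y32 Y33
   = block3 (X11**Y11 + X12**Y21 + X13**Y31) (X11**Y12 + X12**Y22 + X13**Y32) (X11**Y13 + X12**Y23 + X13**Y33)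
            (X21**Y11 + X22**Y21 + X23**Y31) (X21**Y12 + X22**Y22 + X23**Y32) (X21**Y13 + X22**Y23 + X23**Y33)
            (X31**Y11 + X32**Y21 + X33**Y31) (X31**Y12 + X32**Y22 + X33**Y32) (X31**Y13 + X32**Y23 + X33**Y33)"
  by (simp add: vec_eq_iff all_Plus matrix_matrix_mult_def sum_UNIV_Plus add.assoc)

lemma block32_mult2:
  shows "block32 X11 X12 X21 X22 X31 X32 ** block2 Y11 Y12 Y21 Y22
   = block32 (X11**Y11 + X12**Y21) (X11**Y12 + X12**Y22)
             (X21**Y11 + X22**Y21) (X21**Y12 + X22**Y22)
             (X31**Y11 + X32**Y21) (X31**Y12 + X32**Y22)"
  by (simp add: vec_eq_iff all_Plus matrix_matrix_mult_def sum_UNIV_Plus add.assoc)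

lemma block32_mult23:
  shows "block32 X11 X12 X21 X22 X31 X32 ** block23 Y11 Y12 Y13 Y21 Y22 Y23
   = block3 (X11**Y11 + X12**Y21) (X11**Y12 + X12**Y22) (X11**Y13 + X12**Y23)
            (X21**Y11 + X22**Y21) (X21**Y12 + X22**Y22) (X21**Y13 + X22**Y23)
            (X31**Y11 + X32**Y21) (X31**Y12 + X32**Y22) (X31**Y13 + X32**Y23)"
  by (simp add: vec_eq_iff all_Plus matrix_matrix_mult_def sum_UNIV_Plus add.assoc)

lemma block3_eq: "block3 X11 X12 X13 X21 X22 X23 X31 X32 X33 = block3 Y11 Y12 Y13 Y21 Y22 Y23 Y31 Y32 Y33
  \<longleftrightarrow> X11 = Y11 \<and> X12 = Y12 \<and> X13 = Y13 \<and> X21 = Y21 \<and> X22 = Y22 \<and> X23 = Y23 \<and> X31 = Y31 \<and> X32 = Y32 \<and> X33 = Y33"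
  by (auto simp add: vec_eq_iff all_Plus)

lemma block3_add: "block3 X11 X12 X13 X21 X22 X23 X31 X32 X33 + block3 Y11 Y12 Y13 Y21 Y22 Y23 Y31 Y32 Y33
  = block3 (X11+Y11) (X12+Y12) (X13+Y13) (X21+Y21) (X22+Y22) (X23+Y23) (X31+Y31) (X32+Y32) (X33+Y33)"
  by (simp add: vec_eq_iff all_Plus)

lemma block3_scaleR: "c *\<^sub>R block3 X11 X12 X13 X21 X22 X23 X31 X32 X33
  = block3 (c *\<^sub>R X11) (c *\<^sub>R X12) (c *\<^sub>R X13) (c *\<^sub>R X21) (c *\<^sub>R X22) (c *\<^sub>R X23) (c *\<^sub>R X31) (c *\<^sub>R X32) (c *\<^sub>R X33)"
  by (simp add: vec_eq_iff all_Plus)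

lemma block3_mat: "(mat c :: 'a::zero^('n::finite+('p::finite+'q::finite))^('n+('p+'q))) = block3 (mat c) 0 0 0 (mat c) 0 0 0 (mat c)"
  by (simp add: vec_eq_iff all_Plus mat_def)

lemma cmat_block3: "cmat (block3 X11 X12 X13 X21 X22 X23 X31 X32 X33) = block3 (cmat X11) (cmat X12) (cmat X13) (cmat X21) (cmat X22) (cmat X23) (cmat X31) (cmat X32) (cmat X33)"
  by (simp add: vec_eq_iff all_Plus cmat_def)



lemma tendsto_matrix_mult:
  fixes f :: "'x \<Rightarrow> complex^('n::finite)^('m::finite)" and g :: "'x \<Rightarrow> complex^('k::finite)^'n"
  assumes "(f \<longlongrightarrow> X) F" "(g \<longlongrightarrow> Y) F"
  shows "((\<lambda>x. f x ** g x) \<longlongrightarrow> X ** Y) F"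
  unfolding matrix_matrix_mult_def
  apply (rule vec_tendstoI)
  apply simp
  apply (rule vec_tendstoI)
  apply simp
  apply (intro tendsto_intros assms)
  done

lemma tendsto_det:
  fixes f :: "'x \<Rightarrow> complex^('n::finite)^'n"
  assumes "(f \<longlongrightarrow> X) F"
  shows "((\<lambda>x. det (f x)) \<longlongrightarrow> det X) F"
  unfolding det_def
  by (intro tendsto_intros assms)

lemma matrix_inv_eq:
  fixes X Y :: "'a::field^('n::finite)^'n"
  assumes "X ** Y = mat 1"
  shows "matrix_inv X = Y"
proof -
  have YX: "Y ** X = mat 1" using assms matrix_left_right_inverse by blast
  have ex: "\<exists>Z. X ** Z = mat 1 \<and> Z ** X = mat 1" using assms YX by blast
  have Z: "X ** matrix_inv X = mat 1 \<and> matrix_inv X ** X = mat 1"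
    unfolding matrix_inv_def by (rule someI_ex[OF ex])
  have "matrix_inv X = matrix_inv X ** (X ** Y)" by (simp add: assms)
  also have "\<dots> = Y" by (simp add: matrix_mul_assoc Z)
  finally show ?thesis .
qed

lemma matrix_inv_right:
  fixes X :: "'a::field^('n::finite)^'n"
  assumes "det X \<noteq> 0"
  shows "X ** matrix_inv X = mat 1"
proof -
  obtain Y where "X ** Y = mat 1" using assms invertible_det_nz invertible_right_inverse by blast
  then show ?thesis using matrix_inv_eq by metis
qed

lemma matrix_inv_cramer:
  fixes Y :: "'a::field^('n::finite)^'n"
  assumes "det Y \<noteq> 0"
  shows "matrix_inv Y $ i $ k = det (\<chi> a b. if b = i then (if a = k then 1 else 0) else Y$a$b) / det Y"
proof -
  let ?Z = "matrix_inv Y"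
  let ?x = "(\<chi> j. ?Z $ j $ k) :: 'a^'n"
  let ?b = "(\<chi> a. if a = k then 1 else 0) :: 'a^'n"
  have "Y *v ?x = (\<chi> a. (Y ** ?Z) $ a $ k)"
    by (simp add: matrix_vector_mult_def matrix_matrix_mult_def)
  also have "\<dots> = ?b" using matrix_inv_right[OF assms] by (simp add: mat_def)
  finally have "?x = (\<chi> j. det(\<chi> a b. if b = j then ?b$a else Y$a$b) / det Y)"
    using cramer[OF assms] by blast
  then have "?x $ i = (\<chi> j. det(\<chi> a b. if b = j then ?b$a else Y$a$b) / det Y) $ i" by simp
  then show ?thesis by (simp only: vec_lambda_beta)
qed

lemma tendsto_matrix_inv:
  fixes f :: "'x \<Rightarrow> complex^('n::finite)^'n"
  assumes f: "(f \<longlongrightarrow> X) F" and d: "det X \<noteq> 0"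
  shows "((\<lambda>x. matrix_inv (f x)) \<longlongrightarrow> matrix_inv X) F"
proof -
  have ev: "eventually (\<lambda>x. det (f x) \<noteq> 0) F"
    using tendsto_imp_eventually_ne[OF tendsto_det[OF f] d] .
  let ?R = "\<lambda>Y::complex^'n^'n. (\<chi> i k. det (\<chi> a b. if b = i then (if a = k then 1 else 0) else Y$a$b) / det Y) :: complex^'n^'n"
  have ev2: "eventually (\<lambda>x. ?R (f x) = matrix_inv (f x)) F"
    using ev by eventually_elim (simp add: vec_eq_iff matrix_inv_cramer)
  have eq: "?R X = matrix_inv X" by (simp add: vec_eq_iff matrix_inv_cramer d)
  have cont: "((\<lambda>x. ?R (f x)) \<longlongrightarrow> ?R X) F"
  proof (rule vec_tendstoI, simp, rule vec_tendstoI, simp)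
    fix i k
    have m: "((\<lambda>x. (\<chi> a b. if b = i then (if a = k then 1 else 0) else f x$a$b) :: complex^'n^'n)
       \<longlongrightarrow> (\<chi> a b. if b = i then (if a = k then 1 else 0) else X$a$b)) F"
    proof (rule vec_tendstoI, rule vec_tendstoI)
      fix a b
      show "((\<lambda>x. (\<chi> a b. if b = i then (if a = k then 1 else 0) else f x$a$b) $ a $ b) \<longlongrightarrow>
        (\<chi> a b. if b = i then (if a = k then 1 else 0) else X$a$b) $ a $ b) F"
        by (cases "b = i") (simp_all add: tendsto_vec_nth f)
    qed
    show "((\<lambda>x. det (\<chi> a b. if b = i then if a = k then 1 else 0 else f x $ a $ b) / det (f x)) \<longlongrightarrow>
         det (\<chi> a b. if b = i then if a = k then 1 else 0 else X $ a $ b) / det X) F"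
      by (intro tendsto_divide tendsto_det m f d)
  qed
  show ?thesis
    using cont unfolding eq by (rule Lim_transform_eventually) (rule ev2)
qed



definition csc :: "'a::comm_ring_1 \<Rightarrow> 'a^('n::finite)^('m::finite) \<Rightarrow> 'a^'n^'m" where
  "csc c X = (\<chi> i j. c * X$i$j)"

lemma csc_nth [simp]: "csc c X $ i $ j = c * X $ i $ j" by (simp add: csc_def)

lemma csc_mult_left [simp]: "csc c X ** Y = csc c (X ** Y)"
  by (simp add: vec_eq_iff matrix_matrix_mult_def sum_distrib_left mult.assoc)
lemma csc_mult_right [simp]: "X ** csc c Y = csc c (X ** Y)"
  by (simp add: vec_eq_iff matrix_matrix_mult_def sum_distrib_left mult_ac)
lemma csc_csc [simp]: "csc c (csc d X) = csc (c * d) X"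
  by (simp add: vec_eq_iff mult.assoc)
lemma mat_mult_left [simp]: "mat c ** X = csc c X"
  by (simp add: vec_eq_iff matrix_matrix_mult_def mat_def if_distrib if_distribR sum.delta cong: if_cong)
lemma mat_mult_right [simp]: "X ** mat c = csc c X"
  by (simp add: vec_eq_iff matrix_matrix_mult_def mat_def if_distrib if_distribR sum.delta' mult.commute cong: if_cong)
lemma csc_1 [simp]: "csc 1 X = X" by (simp add: vec_eq_iff)
lemma csc_0 [simp]: "csc 0 X = 0" by (simp add: vec_eq_iff)
lemma csc_zero [simp]: "csc c 0 = 0" by (simp add: vec_eq_iff)
lemma csc_mat [simp]: "csc c (mat d) = mat (c * d)" by (simp add: vec_eq_iff mat_def)
lemma neg_csc [simp]: "- X = csc (-1) X" by (simp add: vec_eq_iff)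
lemma csc_add_same [simp]: "csc c X + csc d X = csc (c + d) X" by (simp add: vec_eq_iff algebra_simps)
lemma csc_add_same2 [simp]: "csc c X + (csc d X + Y) = csc (c + d) X + Y" by (simp add: vec_eq_iff algebra_simps)
lemma csc_diff: "X - Y = X + csc (-1) Y" by (simp add: vec_eq_iff)
lemma scaleR_csc [simp]: "(r::real) *\<^sub>R (X::complex^('n::finite)^('m::finite)) = csc (complex_of_real r) X"
  by (simp add: vec_eq_iff scaleR_conv_of_real[where 'a=complex])
lemma transpose_csc [simp]: "transpose (csc c X) = csc c (transpose X)"
  by (simp add: vec_eq_iff transpose_def)

lemma cmat_mult [simp]: "cmat (X ** Y) = cmat X ** cmat Y"
  by (simp add: vec_eq_iff cmat_def matrix_matrix_mult_def)
lemma cmat_neg [simp]: "cmat (- X) = csc (-1) (cmat X)"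
  by (simp add: vec_eq_iff cmat_def)
lemma cmat_add [simp]: "cmat (X + Y) = cmat X + cmat Y"
  by (simp add: vec_eq_iff cmat_def)
lemma cmat_zero [simp]: "cmat 0 = 0"
  by (simp add: vec_eq_iff cmat_def)
lemma cmat_mat [simp]: "cmat (mat c) = mat (complex_of_real c)"
  by (simp add: vec_eq_iff cmat_def mat_def)
lemma cmat_scaleR [simp]: "cmat (c *\<^sub>R X) = csc (complex_of_real c) (cmat X)"
  by (simp add: vec_eq_iff cmat_def)
lemma cmat_csc [simp]: "cmat (csc c X) = csc (complex_of_real c) (cmat X)"
  by (simp add: vec_eq_iff cmat_def)
lemma det_cmat: "det (cmat A) = complex_of_real (det A)"
  by (simp add: det_def cmat_def)



lemma inv0:
  fixes cA Ai :: "complex^('n::finite)^'n" and cB :: "complex^('p::finite)^'n"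
  assumes "cA ** Ai = mat 1" "a \<noteq> 0" "b \<noteq> 0"
  shows "block3 (csc (-1) cA) (csc (-1) cB) 0 0 (mat a) 0 0 0 (mat b) **
         block3 (csc (-1) Ai) (csc (- inverse a) (Ai ** cB)) 0 0 (mat (inverse a)) 0 0 0 (mat (inverse b))
       = (mat 1 :: complex^('n+('p+('r::finite)))^('n+('p+'r)))"
  using assms by (simp add: block3_mult block3_mat block3_eq matrix_mul_assoc)

lemma final:
  fixes A :: "real^('n::finite)^'n" and B :: "real^('p::finite)^'n"
    and C1 :: "real^'n^('r1::finite)" and C2 :: "real^'n^('r2::finite)"
  assumes "a = s + complex_of_real (m - rho)" "b = s + complex_of_real (mu - rho)"
  shows "Cbold C1 C2 mu ** block3 (csc (-1) (cmat (matrix_inv A))) (csc (- inverse a) (cmat (matrix_inv A) ** cmat B)) 0 0 (mat (inverse a)) 0 0 0 (mat (inverse b))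
     ** Bbold A B C1 C2 mu = Hbold A B C1 C2 m mu rho s"
  unfolding Cbold_def Bbold_def Hbold_def Piu_def assms
  by (simp add: block3_mult block32_mult2 block32_mult23 block3_eq matrix_mul_assoc add_ac)



lemma csc_block3: "csc c (block3 X11 X12 X13 X21 X22 X23 X31 X32 X33) = block3 (csc c X11) (csc c X12) (csc c X13) (csc c X21) (csc c X22) (csc c X23) (csc c X31) (csc c X32) (csc c X33)"
  by (simp add: vec_eq_iff all_Plus)

theorem lemma1:
  fixes A :: "real^'n^'n" and B :: "real^'p^'n"
    and C1 :: "real^'n^'r1" and C2 :: "real^'n^'r2"
    and m mu rho :: real and s :: complex
  assumes "hurwitz A" and "m > 0" and "mu > 0" and "rho \<ge> 0"
    and "s \<noteq> - complex_of_real (m - rho)" and "s \<noteq> - complex_of_real (mu - rho)"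
  shows "((\<lambda>eps. Gbold A B C1 C2 m mu eps rho s) \<longlongrightarrow> Hbold A B C1 C2 m mu rho s) (at_right 0)"
proof -
  define a where "a = s + complex_of_real (m - rho)"
  define b where "b = s + complex_of_real (mu - rho)"
  have a0: "a \<noteq> 0"
  proof
    assume "a = 0"
    then have "s = - complex_of_real (m - rho)" by (metis a_def eq_neg_iff_add_eq_0)
    with assms(5) show False by simp
  qed
  have b0: "b \<noteq> 0"
  proof
    assume "b = 0"
    then have "s = - complex_of_real (mu - rho)" by (metis b_def eq_neg_iff_add_eq_0)
    with assms(6) show False by simp
  qed
  have dA: "det A \<noteq> 0"
  proof
    assume "det A = 0"
    then have "det (cmat A) = 0" by (simp add: det_cmat)
    moreover have "mat 0 - cmat A = mat (-1) ** cmat A" by (simp add: csc_diff)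
    moreover have "det (mat (-1) ** cmat A) = det (mat (-1) :: complex^'n^'n) * det (cmat A)" by (rule det_mul)
    ultimately have "det (mat 0 - cmat A) = 0" by (simp only:) simp
    then have "Re (0::complex) < 0" using assms(1) unfolding hurwitz_def by blast
    then show False by simp
  qed
  have AAi: "cmat A ** cmat (matrix_inv A) = mat 1"
  proof -
    have "cmat (A ** matrix_inv A) = cmat (mat 1)" using matrix_inv_right[OF dA] by simp
    then show ?thesis by simp
  qed
  define N0 where "N0 = (block3 (csc (-1) (cmat A)) (csc (-1) (cmat B)) 0 0 (mat a) 0 0 0 (mat b) :: complex^('n+('p+'r2))^('n+('p+'r2)))"
  define Inv0 where "Inv0 = (block3 (csc (-1) (cmat (matrix_inv A))) (csc (- inverse a) (cmat (matrix_inv A) ** cmat B)) 0 0 (mat (inverse a)) 0 0 0 (mat (inverse b)) :: complex^('n+('p+'r2))^('n+('p+'r2)))"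
  define E where "E = (block3 (mat (s - complex_of_real rho)) 0 0 0 0 0 0 0 0 :: complex^('n+('p+'r2))^('n+('p+'r2)))"
  define N where "N = (\<lambda>eps::real. N0 + eps *\<^sub>R E)"
  define D where "D = (\<lambda>eps::real. block3 (mat (complex_of_real (1/eps))) 0 0 0 (mat 1) 0 0 0 (mat 1) :: complex^('n+('p+'r2))^('n+('p+'r2)))"
  define Di where "Di = (\<lambda>eps::real. block3 (mat (complex_of_real eps)) 0 0 0 (mat 1) 0 0 0 (mat 1) :: complex^('n+('p+'r2))^('n+('p+'r2)))"
  have N0Inv0: "N0 ** Inv0 = mat 1" unfolding N0_def Inv0_def by (rule inv0[OF AAi a0 b0])
  have detN0: "det N0 \<noteq> 0" using N0Inv0 invertible_right_inverse invertible_det_nz by blast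
  have minv0: "matrix_inv N0 = Inv0" by (rule matrix_inv_eq[OF N0Inv0])
  have limN: "(N \<longlongrightarrow> N0) (at_right 0)"
  proof -
    have "((\<lambda>e. N0 + e *\<^sub>R E) \<longlongrightarrow> N0 + 0 *\<^sub>R E) (at_right 0)"
      by (intro tendsto_intros)
    then show ?thesis unfolding N_def by simp
  qed
  have limG0: "((\<lambda>e. Cbold C1 C2 mu ** matrix_inv (N e) ** Bbold A B C1 C2 mu) \<longlongrightarrow>
      Cbold C1 C2 mu ** matrix_inv N0 ** Bbold A B C1 C2 mu) (at_right 0)"
    by (intro tendsto_matrix_mult tendsto_const tendsto_matrix_inv[OF limN detN0])
  have Hval: "Cbold C1 C2 mu ** matrix_inv N0 ** Bbold A B C1 C2 mu = Hbold A B C1 C2 m mu rho s"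
    unfolding minv0 Inv0_def by (rule final[OF a_def b_def])
  have c2: "mat s - cmat (Aepsrho A B m mu e rho) = D e ** N e" if "e \<noteq> 0" for e
    unfolding Aepsrho_def Aeps_def D_def N_def N0_def E_def
    using that
    apply (simp add: cmat_block3 block3_mat block3_mult block3_add block3_eq csc_diff csc_block3)
    apply (auto simp: vec_eq_iff mat_def field_simps a_def b_def)
    done
  have c3a: "D e ** Di e = mat 1" if "e \<noteq> 0" for e
    unfolding D_def Di_def using that
    by (simp add: block3_mult block3_mat block3_eq flip: of_real_mult)
  have c3b: "Di e ** Bbold A B C1 C2 mu = Bbold A B C1 C2 mu" for e
    unfolding Di_def Bbold_def
    by (simp add: block3_mult block3_eq)
  have ev: "eventually (\<lambda>e. Cbold C1 C2 mu ** matrix_inv (N e) ** Bbold A B C1 C2 mu = Gbold A B C1 C2 m mu e rho s) (at_right 0)"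
  proof -
    have "eventually (\<lambda>e. det (N e) \<noteq> 0) (at_right 0)"
      using tendsto_imp_eventually_ne[OF tendsto_det[OF limN] detN0] .
    moreover have "eventually (\<lambda>e::real. 0 < e) (at_right 0)" by (rule eventually_at_right_less)
    ultimately show ?thesis
    proof eventually_elim
      case (elim e)
      then have e0: "e \<noteq> 0" by simp
      have "(mat s - cmat (Aepsrho A B m mu e rho)) ** (matrix_inv (N e) ** Di e) = D e ** (N e ** matrix_inv (N e)) ** Di e"
        unfolding c2[OF e0] by (simp only: matrix_mul_assoc)
      also have "\<dots> = mat 1" using matrix_inv_right[OF elim(1)] c3a[OF e0] by simp
      finally have "matrix_inv (mat s - cmat (Aepsrho A B m mu e rho)) = matrix_inv (N e) ** Di e"
        by (rule matrix_inv_eq)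
      then show ?case unfolding Gbold_def
        by (simp only: matrix_mul_assoc[symmetric] c3b)
    qed
  qed
  show ?thesis
    using Lim_transform_eventually[OF limG0 ev] unfolding Hval .
qed

end
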